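(* A convergence group $G$ is $g$-barrelled if and only if its locally quasi-convex modification $\tau(G)$ is $g$-barrelled.
   Context: All groups are abelian. A convergence group is an abelian group with a convergence structure (an assignment to each point $x$ of a collection of filters converging to $x$). This assignment must satisfy three conditions: point ultrafilters converge to their point; finite intersections of filters converging to $x$ converge to $x$; and finer filters converge. The group operation must be compatible: $\mathcal F\to x$, $\mathcal G\to y$ imply $\mathcal F-\mathcal G\to x-y$. Topological groups are convergence groups. $\mathbb T=\mathbb R/\mathbb Z$, $\mathbb T_+=\rho([-1/4,1/4])$ where $\rho:\mathbb R\to\mathbb T$ is the quotient map. $\Gamma G$ is the group of continuous homomorphisms $G\to\mathbb T$, and $\Gamma_s G$ is $\Gamma G$ with the topology of pointwise convergence. A set $M\subseteq\Gamma G$ is equicontinuous if for every filter $\mathcal F\to0$ in $G$, the filter generated by $\{\varphi(x):\varphi\in M,x\in F\}$, $F\in\mathcal F$, converges to $0$ in $\mathbb T$. A convergence group $G$ is $g$-barrelled if every compact subset of $\Gamma_s G$ is equicontinuous. A subset $A$ of a topological group $G$ is quasi-convex if for every $x\notin A$ there is a continuous character $\varphi$ with $\varphi(A)\subseteq\mathbb T_+$ and $\varphi(x)\notin\mathbb T_+$. A topological group is locally quasi-convex if it has a zero neighbourhood base of quasi-convex sets. The locally quasi-convex modification $\tau(G)$ of a convergence group $G$ is the finest locally quasi-convex group topology on $G$ coarser than the convergence structure of $G$. *)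

theory Defs
  imports "HOL-Analysis.Analysis"
begin

text \<open>A convergence structure on an abelian group 'a is a relation conv F x
  meaning "the filter F converges to x". In Isabelle's filter order, F \<le> G means
  F is finer than G, and sup F G is the intersection of the filters.\<close>

definition convergence_group :: "('a::ab_group_add filter \<Rightarrow> 'a \<Rightarrow> bool) \<Rightarrow> bool" where
  "convergence_group conv \<longleftrightarrow>
     (\<forall>x. conv (principal {x}) x) \<and>
     (\<forall>F G x. conv F x \<and> conv G x \<longrightarrow> conv (sup F G) x) \<and>
     (\<forall>F G x. conv F x \<and> G \<le> F \<longrightarrow> conv G x) \<and>
     (\<forall>F G x y. conv F x \<and> conv G y \<longrightarrow>
        conv (filtermap (\<lambda>(a, b). a - b) (F \<times>\<^sub>F G)) (x - y))"

text \<open>The circle group T = R/Z, realised as the image of the quotient map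
  rho : R \<rightarrow> C, rho t = exp(2 pi i t) (a topological group isomorphism R/Z \<cong> rho R).
  The group operation of T becomes complex multiplication, 0 of T becomes 1.\<close>

definition rho :: "real \<Rightarrow> complex" where
  "rho t = cis (2 * pi * t)"

definition Tcirc :: "complex set" where
  "Tcirc = range rho"

definition Tplus :: "complex set" where
  "Tplus = rho ` {-1/4 .. 1/4}"

definition is_char :: "('a::ab_group_add \<Rightarrow> complex) \<Rightarrow> bool" where
  "is_char \<phi> \<longleftrightarrow> (\<forall>x. \<phi> x \<in> Tcirc) \<and> (\<forall>x y. \<phi> (x + y) = \<phi> x * \<phi> y)"

definition Gamma :: "('a::ab_group_add filter \<Rightarrow> 'a \<Rightarrow> bool) \<Rightarrow> ('a \<Rightarrow> complex) set" where
  "Gamma conv = {\<phi>. is_char \<phi> \<and> (\<forall>F x. conv F x \<longrightarrow> filterlim \<phi> (nhds (\<phi> x)) F)}"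

text \<open>Equicontinuity: for every F \<rightarrow> 0, the filter generated by the sets
  {phi x | phi \<in> M, x \<in> A}, A \<in> F, converges to the neutral element of T.\<close>
definition equicontinuous ::
    "('a::ab_group_add filter \<Rightarrow> 'a \<Rightarrow> bool) \<Rightarrow> ('a \<Rightarrow> complex) set \<Rightarrow> bool" where
  "equicontinuous conv M \<longleftrightarrow>
     (\<forall>F. conv F 0 \<longrightarrow>
        filterlim (\<lambda>(\<phi>, x). \<phi> x) (nhds 1) (principal M \<times>\<^sub>F F))"

text \<open>Gamma_s G is Gamma G with the topology of pointwise convergence, i.e. the
  subspace topology of the product topology on 'a \<Rightarrow> complex; compactness of a
  subset of Gamma G is therefore compactness in the product topology.\<close>
definition g_barrelled :: "('a::ab_group_add filter \<Rightarrow> 'a \<Rightarrow> bool) \<Rightarrow> bool" where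
  "g_barrelled conv \<longleftrightarrow>
     (\<forall>M. M \<subseteq> Gamma conv \<and> compact M \<longrightarrow> equicontinuous conv M)"

definition group_topology :: "'a::ab_group_add topology \<Rightarrow> bool" where
  "group_topology T \<longleftrightarrow> topspace T = UNIV \<and>
     continuous_map (prod_topology T T) T (\<lambda>(x, y). x - y)"

definition cont_char :: "'a::ab_group_add topology \<Rightarrow> ('a \<Rightarrow> complex) \<Rightarrow> bool" where
  "cont_char T \<phi> \<longleftrightarrow> is_char \<phi> \<and> continuous_map T euclidean \<phi>"

definition quasi_convex :: "'a::ab_group_add topology \<Rightarrow> 'a set \<Rightarrow> bool" where
  "quasi_convex T A \<longleftrightarrow>
     (\<forall>x. x \<notin> A \<longrightarrow> (\<exists>\<phi>. cont_char T \<phi> \<and> \<phi> ` A \<subseteq> Tplus \<and> \<phi> x \<notin> Tplus))"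

definition locally_quasi_convex :: "'a::ab_group_add topology \<Rightarrow> bool" where
  "locally_quasi_convex T \<longleftrightarrow> group_topology T \<and>
     (\<forall>U. openin T U \<and> 0 \<in> U \<longrightarrow>
        (\<exists>V. quasi_convex T V \<and> V \<subseteq> U \<and> (\<exists>W. openin T W \<and> 0 \<in> W \<and> W \<subseteq> V)))"

definition conv_of :: "'a topology \<Rightarrow> 'a filter \<Rightarrow> 'a \<Rightarrow> bool" where
  "conv_of T F x \<longleftrightarrow> F \<le> nhdsin T x"

definition coarser_than_conv :: "'a topology \<Rightarrow> ('a filter \<Rightarrow> 'a \<Rightarrow> bool) \<Rightarrow> bool" where
  "coarser_than_conv T conv \<longleftrightarrow> (\<forall>F x. conv F x \<longrightarrow> conv_of T F x)"

definition lqc_modification ::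
    "('a::ab_group_add filter \<Rightarrow> 'a \<Rightarrow> bool) \<Rightarrow> 'a topology" where
  "lqc_modification conv =
     (THE T. locally_quasi_convex T \<and> coarser_than_conv T conv \<and>
        (\<forall>T'. locally_quasi_convex T' \<and> coarser_than_conv T' conv \<longrightarrow>
              (\<forall>S. openin T' S \<longrightarrow> openin T S)))"

end

theory Submission
  imports Defs
begin


lemma Tcirc_eq: "Tcirc = {z. cmod z = 1}"
proof (intro set_eqI iffI)
  fix z assume "z \<in> Tcirc" thus "z \<in> {z. cmod z = 1}" by (auto simp: Tcirc_def rho_def)
next
  fix z assume "z \<in> {z. cmod z = 1}"
  hence z: "cmod z = 1" by simp
  hence "z \<noteq> 0" by auto
  hence "cis (Arg z) = sgn z" by (rule cis_Arg)
  also have "sgn z = z" using z by (simp add: sgn_div_norm)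
  finally have "rho (Arg z / (2*pi)) = z" by (simp add: rho_def)
  thus "z \<in> Tcirc" unfolding Tcirc_def by (metis rangeI)
qed

lemma Tplus_eq: "Tplus = {z. cmod z = 1 \<and> Re z \<ge> 0}"
proof (intro set_eqI iffI)
  fix z assume "z \<in> Tplus"
  then obtain t where t: "-1/4 \<le> t" "t \<le> 1/4" "z = cis (2*pi*t)" by (auto simp: Tplus_def rho_def)
  have "2*pi*t \<le> 2*pi*(1/4)" using t(2) by (intro mult_left_mono) auto
  moreover have "2*pi*(-1/4) \<le> 2*pi*t" using t(1) by (intro mult_left_mono) auto
  ultimately have "0 \<le> cos (2*pi*t)" by (intro cos_ge_zero) auto
  thus "z \<in> {z. cmod z = 1 \<and> Re z \<ge> 0}" using t by simp
next
  fix z assume "z \<in> {z. cmod z = 1 \<and> Re z \<ge> 0}"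
  hence z: "cmod z = 1" "Re z \<ge> 0" by auto
  have sq: "(Re z)^2 + (Im z)^2 = 1" using z(1) by (metis cmod_power2 one_power2)
  have "\<bar>Im z\<bar> \<le> 1" using abs_Im_le_cmod[of z] z(1) by simp
  hence b: "-1 \<le> Im z" "Im z \<le> 1" by auto
  define th where "th = arcsin (Im z)"
  have s: "sin th = Im z" using b by (simp add: th_def)
  have c: "cos th = Re z" using b z(2) sq by (simp add: th_def cos_arcsin real_sqrt_unique)
  have r: "-(pi/2) \<le> th" "th \<le> pi/2" using b th_def arcsin_bounded by auto
  have "rho (th/(2*pi)) = z" using s c by (simp add: rho_def complex_eq_iff)
  moreover have "th/(2*pi) \<in> {-1/4..1/4}" using r by (auto simp: field_simps)
  ultimately show "z \<in> Tplus" unfolding Tplus_def by (metis image_eqI)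
qed

lemma char_norm: "is_char \<phi> \<Longrightarrow> cmod (\<phi> x) = 1"
  by (auto simp: is_char_def Tcirc_eq)

lemma char_add: "is_char \<phi> \<Longrightarrow> \<phi> (x + y) = \<phi> x * \<phi> y"
  by (auto simp: is_char_def)

lemma char_zero: "is_char \<phi> \<Longrightarrow> \<phi> 0 = 1"
proof -
  assume c: "is_char \<phi>"
  have "\<phi> 0 = \<phi> 0 * \<phi> 0" using char_add[OF c, of 0 0] by simp
  moreover have "\<phi> 0 \<noteq> 0" using char_norm[OF c, of 0] by auto
  ultimately show ?thesis by (metis mult_cancel_left2)
qed

lemma char_diff: "is_char \<phi> \<Longrightarrow> \<phi> (x - y) = \<phi> x / \<phi> y"
proof -
  assume c: "is_char \<phi>"
  have "\<phi> x = \<phi> (x - y) * \<phi> y" using char_add[OF c, of "x-y" y] by simp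
  moreover have "\<phi> y \<noteq> 0" using char_norm[OF c, of y] by auto
  ultimately show ?thesis by simp
qed

lemma char_pow: "is_char \<phi> \<Longrightarrow> is_char (\<lambda>x. \<phi> x ^ k)"
  by (auto simp: is_char_def Tcirc_eq norm_power power_mult_distrib)

lemma eventually_prod_principal:
  "eventually P (principal M \<times>\<^sub>F F) \<longleftrightarrow> eventually (\<lambda>y. \<forall>\<phi>\<in>M. P (\<phi>, y)) F"
proof
  assume "eventually P (principal M \<times>\<^sub>F F)"
  then obtain Pf Pg where "eventually Pf (principal M)" "eventually Pg F"
    "\<forall>x y. Pf x \<longrightarrow> Pg y \<longrightarrow> P (x, y)" by (auto simp: eventually_prod_filter)
  thus "eventually (\<lambda>y. \<forall>\<phi>\<in>M. P (\<phi>, y)) F"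
    by (auto simp: eventually_principal elim: eventually_mono)
next
  assume "eventually (\<lambda>y. \<forall>\<phi>\<in>M. P (\<phi>, y)) F"
  thus "eventually P (principal M \<times>\<^sub>F F)"
    unfolding eventually_prod_filter
    by (intro exI[of _ "\<lambda>\<phi>. \<phi> \<in> M"] exI[of _ "\<lambda>y. \<forall>\<phi>\<in>M. P (\<phi>, y)"])
       (auto simp: eventually_principal)
qed

lemma equicont_iff:
  "equicontinuous conv M \<longleftrightarrow>
   (\<forall>F. conv F 0 \<longrightarrow> (\<forall>S. open S \<and> 1 \<in> S \<longrightarrow> eventually (\<lambda>y. \<forall>\<phi>\<in>M. \<phi> y \<in> S) F))"
  unfolding equicontinuous_def tendsto_def eventually_prod_principal by auto

lemma pow2_close:
  assumes "cmod z = 1" "\<forall>j\<le>n. Re (z ^ (2^j)) \<ge> 0"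
  shows "1 - Re z \<le> 1 / 2^n"
  using assms
proof (induction n arbitrary: z)
  case 0
  then have "Re z \<ge> 0" by auto
  then show ?case by simp
next
  case (Suc n)
  have a: "Re z \<ge> 0" using Suc.prems(2)[rule_format, of 0] by simp
  have "cmod (z^2) = 1" using Suc.prems(1) by (simp add: norm_power)
  moreover have "\<forall>j\<le>n. Re ((z^2) ^ (2^j)) \<ge> 0"
  proof (intro allI impI)
    fix j assume "j \<le> n"
    hence "Re (z ^ (2^Suc j)) \<ge> 0" using Suc.prems(2) by auto
    thus "Re ((z^2) ^ (2^j)) \<ge> 0" by (simp add: power_mult[symmetric] mult.commute)
  qed
  ultimately have h: "1 - Re (z^2) \<le> 1/2^n" using Suc.IH by blast
  have sq: "(Re z)^2 + (Im z)^2 = 1" using Suc.prems(1) by (metis cmod_power2 one_power2)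
  have "Re (z^2) = 2 * (Re z)^2 - 1" using sq by (simp add: power2_eq_square)
  hence "1 - (Re z)^2 \<le> 1/2^(Suc n)" using h by simp
  moreover have "Re z \<le> 1" using Suc.prems(1) abs_Re_le_cmod[of z] by simp
  hence "(Re z)^2 \<le> Re z" using a by (simp add: power2_eq_square mult_left_le)
  ultimately show ?case by simp
qed

lemma unit_dist: "cmod z = 1 \<Longrightarrow> (cmod (z - 1))^2 = 2 - 2 * Re z"
proof -
  assume z: "cmod z = 1"
  have sq: "(Re z)^2 + (Im z)^2 = 1" using z by (metis cmod_power2 one_power2)
  have "(cmod (z - 1))^2 = (Re z - 1)^2 + (Im z)^2" by (simp add: cmod_power2)
  also have "\<dots> = 2 - 2 * Re z" using sq by (simp add: power2_eq_square algebra_simps)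
  finally show ?thesis .
qed

lemma pow2_nbhd:
  assumes "open S" "1 \<in> S"
  obtains n where "\<And>z. cmod z = 1 \<Longrightarrow> (\<forall>j\<le>n. Re (z ^ (2^j)) \<ge> 0) \<Longrightarrow> z \<in> S"
proof -
  obtain e where e: "e > 0" "ball 1 e \<subseteq> S" using assms open_contains_ball by blast
  obtain n where n: "2 / e^2 < 2^n"
    using real_arch_pow[of 2 "2/e^2"] by auto
  have "2 / 2^n < e^2" using n e(1) by (simp add: field_simps)
  show ?thesis
  proof (rule that[of n])
    fix z :: complex assume z: "cmod z = 1" "\<forall>j\<le>n. Re (z ^ (2^j)) \<ge> 0"
    have "(cmod (z - 1))^2 \<le> 2 / 2^n" using pow2_close[OF z] unit_dist[OF z(1)] by simp
    also have "\<dots> < e^2" by fact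
    finally have "(cmod (z - 1))^2 < e^2" .
    hence "cmod (z - 1) < e" using e(1) by (meson norm_ge_zero power_less_imp_less_base less_imp_le)
    hence "dist z 1 < e" by (simp add: dist_norm)
    hence "z \<in> ball 1 e" by (simp add: dist_commute)
    thus "z \<in> S" using e(2) by blast
  qed
qed

lemma cont_split:
  fixes f :: "complex \<times> complex \<Rightarrow> complex"
  assumes "isCont f (1,1)" "open S" "f (1,1) \<in> S"
  obtains S' where "open S'" "1 \<in> S'" "\<And>u v. u \<in> S' \<Longrightarrow> v \<in> S' \<Longrightarrow> f (u,v) \<in> S"
proof -
  have "(f \<longlongrightarrow> f (1,1)) (nhds (1,1))" using assms(1) by (simp add: tendsto_nhds_iff isCont_def)
  hence "eventually (\<lambda>p. f p \<in> S) (nhds (1,1))"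
    using assms(2,3) by (rule topological_tendstoD)
  hence "eventually (\<lambda>p. f p \<in> S) (nhds 1 \<times>\<^sub>F nhds 1)" by (simp only: nhds_prod)
  then obtain Q where Q: "eventually Q (nhds 1)" "\<And>x y. Q x \<Longrightarrow> Q y \<Longrightarrow> f (x,y) \<in> S"
    unfolding eventually_prod_same by blast
  then obtain S' where S': "open S'" "1 \<in> S'" "\<forall>x\<in>S'. Q x" unfolding eventually_nhds by blast
  show ?thesis by (rule that[OF S'(1,2)]) (use S'(3) Q(2) in blast)
qed

definition EQ :: "('a::ab_group_add filter \<Rightarrow> 'a \<Rightarrow> bool) \<Rightarrow> ('a \<Rightarrow> complex) set set" where
  "EQ conv = {M. (\<forall>\<phi>\<in>M. is_char \<phi>) \<and> equicontinuous conv M}"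

definition bset :: "('a \<Rightarrow> complex) set \<Rightarrow> complex set \<Rightarrow> 'a set" where
  "bset M S = {y. \<forall>\<phi>\<in>M. \<phi> y \<in> S}"

definition nb :: "('a::ab_group_add filter \<Rightarrow> 'a \<Rightarrow> bool) \<Rightarrow> 'a \<Rightarrow> 'a set \<Rightarrow> bool" where
  "nb conv x U \<longleftrightarrow> (\<exists>M\<in>EQ conv. \<exists>S. open S \<and> 1 \<in> S \<and> (\<forall>y. y - x \<in> bset M S \<longrightarrow> y \<in> U))"

definition Tq :: "('a::ab_group_add filter \<Rightarrow> 'a \<Rightarrow> bool) \<Rightarrow> 'a topology" where
  "Tq conv = topology (\<lambda>U. \<forall>x\<in>U. nb conv x U)"

lemma EQ_union:
  fixes conv :: "'a::ab_group_add filter \<Rightarrow> 'a \<Rightarrow> bool"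
  assumes "M \<in> EQ conv" "N \<in> EQ conv" shows "M \<union> N \<in> EQ conv"
proof -
  have "\<forall>\<phi>\<in>M \<union> N. is_char \<phi>" using assms by (auto simp: EQ_def)
  moreover have "equicontinuous conv (M \<union> N)" unfolding equicont_iff
  proof (intro allI impI)
    fix F and S :: "complex set" assume "conv F 0" "open S \<and> 1 \<in> S"
    hence "eventually (\<lambda>y. \<forall>\<phi>\<in>M. \<phi> y \<in> S) F" "eventually (\<lambda>y. \<forall>\<phi>\<in>N. \<phi> y \<in> S) F"
      using assms by (auto simp: EQ_def equicont_iff)
    thus "eventually (\<lambda>y. \<forall>\<phi>\<in>M \<union> N. \<phi> y \<in> S) F"
      by (rule eventually_elim2) auto
  qed
  ultimately show ?thesis by (simp add: EQ_def)
qed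

lemma EQ_subset:
  fixes conv :: "'a::ab_group_add filter \<Rightarrow> 'a \<Rightarrow> bool"
  assumes "M \<in> EQ conv" "N \<subseteq> M" shows "N \<in> EQ conv"
proof -
  have "\<forall>\<phi>\<in>N. is_char \<phi>" using assms by (auto simp: EQ_def)
  moreover have "equicontinuous conv N" unfolding equicont_iff
  proof (intro allI impI)
    fix F and S :: "complex set" assume "conv F 0" "open S \<and> 1 \<in> S"
    hence "eventually (\<lambda>y. \<forall>\<phi>\<in>M. \<phi> y \<in> S) F" using assms(1) by (auto simp: EQ_def equicont_iff)
    thus "eventually (\<lambda>y. \<forall>\<phi>\<in>N. \<phi> y \<in> S) F" by (rule eventually_mono) (use assms(2) in blast)
  qed
  ultimately show ?thesis by (simp add: EQ_def)
qed

lemma EQ_empty: "{} \<in> EQ conv"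
  unfolding EQ_def equicont_iff by auto

lemma nb_mono: "nb conv x U \<Longrightarrow> U \<subseteq> V \<Longrightarrow> nb conv x V"
  unfolding nb_def by blast

lemma nb_UNIV: "nb conv x UNIV"
  unfolding nb_def by (rule bexI[OF _ EQ_empty], rule exI[of _ UNIV]) auto

lemma istopology_Tq: "istopology (\<lambda>U. \<forall>x\<in>U. nb conv x U)"
  unfolding istopology_def
proof (intro conjI allI impI)
  fix S T assume S: "\<forall>x\<in>S. nb conv x S" and T: "\<forall>x\<in>T. nb conv x T"
  show "\<forall>x\<in>S \<inter> T. nb conv x (S \<inter> T)"
  proof
    fix x assume "x \<in> S \<inter> T"
    then obtain M1 S1 M2 S2 where 1: "M1 \<in> EQ conv" "open S1" "1 \<in> S1" "\<forall>y. y - x \<in> bset M1 S1 \<longrightarrow> y \<in> S"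
      and 2: "M2 \<in> EQ conv" "open S2" "1 \<in> S2" "\<forall>y. y - x \<in> bset M2 S2 \<longrightarrow> y \<in> T"
      using S T unfolding nb_def by blast
    show "nb conv x (S \<inter> T)" unfolding nb_def
      by (rule bexI[of _ "M1 \<union> M2"], rule exI[of _ "S1 \<inter> S2"])
         (use 1 2 EQ_union in \<open>auto simp: bset_def\<close>)
  qed
next
  fix K assume "\<forall>K\<in>K. \<forall>x\<in>K. nb conv x K"
  thus "\<forall>x\<in>\<Union>K. nb conv x (\<Union>K)" by (meson Union_upper nb_mono UnionE)
qed

lemma openin_Tq: "openin (Tq conv) U \<longleftrightarrow> (\<forall>x\<in>U. nb conv x U)"
  unfolding Tq_def topology_inverse'[OF istopology_Tq] ..

lemma topspace_Tq: "topspace (Tq conv) = UNIV"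
  unfolding topspace_def using openin_Tq nb_UNIV by blast


lemma nb_open:
  assumes "nb conv x U"
  shows "\<exists>W. openin (Tq conv) W \<and> x \<in> W \<and> W \<subseteq> U"
proof (intro exI[of _ "{y. nb conv y U}"] conjI)
  let ?O = "{y. nb conv y U}"
  show "x \<in> ?O" using assms by simp
  show "?O \<subseteq> U"
  proof
    fix y assume "y \<in> ?O"
    then obtain M S where "M \<in> EQ conv" "1 \<in> S" "\<forall>z. z - y \<in> bset M S \<longrightarrow> z \<in> U"
      unfolding nb_def by blast
    thus "y \<in> U" by (auto simp: bset_def EQ_def char_zero)
  qed
  show "openin (Tq conv) ?O" unfolding openin_Tq
  proof
    fix y assume "y \<in> ?O"
    then obtain M S where M: "M \<in> EQ conv" "open S" "1 \<in> S" "\<forall>z. z - y \<in> bset M S \<longrightarrow> z \<in> U"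
      unfolding nb_def by blast
    obtain S' where S': "open S'" "1 \<in> S'" "\<And>u v. u \<in> S' \<Longrightarrow> v \<in> S' \<Longrightarrow> u * v \<in> S"
      using cont_split[of "\<lambda>p. fst p * snd p" S] M(2,3) by (auto intro!: continuous_intros)
    have ch: "\<And>\<phi>. \<phi> \<in> M \<Longrightarrow> is_char \<phi>" using M(1) by (auto simp: EQ_def)
    show "nb conv y ?O" unfolding nb_def[of conv y ?O]
    proof (intro bexI[OF _ M(1)] exI[of _ S'] conjI allI impI)
      fix z assume z: "z - y \<in> bset M S'"
      show "z \<in> ?O" unfolding nb_def mem_Collect_eq
      proof (intro bexI[OF _ M(1)] exI[of _ S'] conjI allI impI)
        fix w assume w: "w - z \<in> bset M S'"
        have "w - y \<in> bset M S"
          unfolding bset_def mem_Collect_eq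
        proof
          fix \<phi> assume p: "\<phi> \<in> M"
          have "\<phi> (w - y) = \<phi> (w - z) * \<phi> (z - y)"
            using char_add[OF ch[OF p], of "w - z" "z - y"] by simp
          thus "\<phi> (w - y) \<in> S" using w z p S'(3) by (auto simp: bset_def)
        qed
        thus "w \<in> U" using M(4) by blast
      qed (use S' in auto)
    qed (use S' in auto)
  qed
qed

lemma nb_of_open: "openin (Tq conv) U \<Longrightarrow> x \<in> U \<Longrightarrow> nb conv x U"
  using openin_Tq by blast

lemma nb_eventually: "nb conv x U \<Longrightarrow> eventually (\<lambda>y. y \<in> U) (nhdsin (Tq conv) x)"
  using nb_open[of conv x U] unfolding eventually_nhdsin by blast

lemma EQ_char_nb:
  assumes "M \<in> EQ conv" "\<phi> \<in> M" "open S" "\<phi> x \<in> S"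
  shows "nb conv x {y. \<phi> y \<in> S}"
proof -
  have c: "is_char \<phi>" using assms by (auto simp: EQ_def)
  have E: "{\<phi>} \<in> EQ conv" using EQ_subset assms by blast
  have o: "open {w. \<phi> x * w \<in> S}"
    using open_vimage[OF assms(3), of "\<lambda>w. \<phi> x * w"] by (auto simp: vimage_def intro!: continuous_intros)
  show ?thesis unfolding nb_def
  proof (intro bexI[OF _ E] exI[of _ "{w. \<phi> x * w \<in> S}"] conjI allI impI)
    fix y assume "y - x \<in> bset {\<phi>} {w. \<phi> x * w \<in> S}"
    moreover have "\<phi> y = \<phi> x * \<phi> (y - x)" using char_add[OF c, of x "y - x"] by simp
    ultimately show "y \<in> {y. \<phi> y \<in> S}" by (simp add: bset_def)
  qed (use o assms in auto)
qed

lemma EQ_cont_char: "M \<in> EQ conv \<Longrightarrow> \<phi> \<in> M \<Longrightarrow> cont_char (Tq conv) \<phi>"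
  unfolding cont_char_def continuous_map topspace_Tq
proof (intro conjI allI impI)
  assume "M \<in> EQ conv" "\<phi> \<in> M"
  thus "is_char \<phi>" by (auto simp: EQ_def)
  fix U :: "complex set" assume "openin euclidean U"
  thus "openin (Tq conv) {x \<in> UNIV. \<phi> x \<in> U}"
    unfolding openin_Tq using EQ_char_nb \<open>M \<in> EQ conv\<close> \<open>\<phi> \<in> M\<close> by auto
qed auto



definition pw :: "nat \<Rightarrow> ('a \<Rightarrow> complex) set \<Rightarrow> ('a \<Rightarrow> complex) set" where
  "pw n M = {\<lambda>x. \<phi> x ^ (2^j) | \<phi> j. \<phi> \<in> M \<and> j \<le> n}"

lemma EQ_pow:
  fixes conv :: "'a::ab_group_add filter \<Rightarrow> 'a \<Rightarrow> bool"
  assumes M: "M \<in> EQ conv" shows "pw n M \<in> EQ conv"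
proof -
  have "\<forall>\<psi>\<in>pw n M. is_char \<psi>" using M by (auto simp: pw_def EQ_def intro: char_pow)
  moreover have "equicontinuous conv (pw n M)" unfolding equicont_iff
  proof (intro allI impI)
    fix F and S :: "complex set" assume F: "conv F 0" and S: "open S \<and> 1 \<in> S"
    let ?S' = "\<Inter>j\<in>{..n}. (\<lambda>z. z ^ (2^j)) -` S"
    have "open ?S'"
      by (intro open_INT finite_atMost ballI open_vimage) (use S in \<open>auto intro!: continuous_intros\<close>)
    moreover have "1 \<in> ?S'" using S by auto
    moreover have "\<forall>S. open S \<and> 1 \<in> S \<longrightarrow> eventually (\<lambda>y. \<forall>\<phi>\<in>M. \<phi> y \<in> S) F"
      using M F by (simp add: EQ_def equicont_iff)
    ultimately have "eventually (\<lambda>y. \<forall>\<phi>\<in>M. \<phi> y \<in> ?S') F" by blast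
    thus "eventually (\<lambda>y. \<forall>\<psi>\<in>pw n M. \<psi> y \<in> S) F"
      by (rule eventually_mono) (auto simp: pw_def)
  qed
  ultimately show ?thesis by (simp add: EQ_def)
qed

lemma gt_diff:
  assumes "group_topology T" "continuous_map T T f" "continuous_map T T g"
  shows "continuous_map T T (\<lambda>x. f x - g x)"
proof -
  have "continuous_map T (prod_topology T T) (\<lambda>x. (f x, g x))"
    using assms by (intro continuous_map_pairedI)
  hence "continuous_map T T ((\<lambda>(x, y). x - y) \<circ> (\<lambda>x. (f x, g x)))"
    using assms(1) unfolding group_topology_def by (intro continuous_map_compose) auto
  thus ?thesis by (simp add: o_def)
qed

lemma gt_const: "group_topology T \<Longrightarrow> continuous_map T T (\<lambda>x. c)"
  by (simp add: group_topology_def)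

lemma gt_open_preimage:
  assumes "group_topology T" "continuous_map T T f" "openin T U"
  shows "openin T {x. f x \<in> U}"
  using openin_continuous_map_preimage[OF assms(2,3)] assms(1) by (simp add: group_topology_def)

lemma group_topology_Tq:
  fixes conv :: "'a::ab_group_add filter \<Rightarrow> 'a \<Rightarrow> bool"
  shows "group_topology (Tq conv)"
  unfolding group_topology_def continuous_map topspace_Tq topspace_prod_topology
proof (intro conjI allI impI)
  fix U assume U: "openin (Tq conv) U"
  show "openin (prod_topology (Tq conv) (Tq conv)) {x \<in> UNIV \<times> UNIV. (case x of (x, y) \<Rightarrow> x - y) \<in> U}"
    unfolding openin_prod_topology_alt
  proof (intro allI impI)
    fix x y assume "(x, y) \<in> {x \<in> UNIV \<times> UNIV. (case x of (x, y) \<Rightarrow> x - y) \<in> U}"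
    hence "x - y \<in> U" by simp
    then obtain M S where M: "M \<in> EQ conv" "open S" "1 \<in> S" "\<forall>z. z - (x - y) \<in> bset M S \<longrightarrow> z \<in> U"
      using nb_of_open[OF U] unfolding nb_def by blast
    have ch: "\<And>\<phi>. \<phi> \<in> M \<Longrightarrow> is_char \<phi>" using M(1) by (auto simp: EQ_def)
    obtain S' where S': "open S'" "1 \<in> S'" "\<And>u v. u \<in> S' \<Longrightarrow> v \<in> S' \<Longrightarrow> u / v \<in> S"
      using cont_split[of "\<lambda>p. fst p / snd p" S] M(2,3) by (auto intro!: continuous_intros)
    have "nb conv x {a. a - x \<in> bset M S'}" unfolding nb_def using M(1) S'(1,2) by blast
    then obtain A where A: "openin (Tq conv) A" "x \<in> A" "A \<subseteq> {a. a - x \<in> bset M S'}"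
      using nb_open by blast
    have "nb conv y {a. a - y \<in> bset M S'}" unfolding nb_def using M(1) S'(1,2) by blast
    then obtain B where B: "openin (Tq conv) B" "y \<in> B" "B \<subseteq> {a. a - y \<in> bset M S'}"
      using nb_open by blast
    have "A \<times> B \<subseteq> {x \<in> UNIV \<times> UNIV. (case x of (x, y) \<Rightarrow> x - y) \<in> U}"
    proof
      fix p assume "p \<in> A \<times> B"
      then obtain a b where pab: "p = (a, b)" and ab: "a \<in> A" "b \<in> B" by blast
      have "a - b - (x - y) \<in> bset M S"
        unfolding bset_def mem_Collect_eq
      proof
        fix \<phi> assume p: "\<phi> \<in> M"
        have "\<phi> (a - b - (x - y)) = \<phi> ((a - x) - (b - y))" by (simp add: algebra_simps)
        also have "\<dots> = \<phi> (a - x) / \<phi> (b - y)" by (rule char_diff[OF ch[OF p]])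
        moreover have "\<phi> (a - x) \<in> S'" using ab(1) A(3) p by (auto simp: bset_def)
        moreover have "\<phi> (b - y) \<in> S'" using ab(2) B(3) p by (auto simp: bset_def)
        ultimately show "\<phi> (a - b - (x - y)) \<in> S" using S'(3) by simp
      qed
      hence "a - b \<in> U" using M(4) by blast
      thus "p \<in> {x \<in> UNIV \<times> UNIV. (case x of (x, y) \<Rightarrow> x - y) \<in> U}" using pab by simp
    qed
    thus "\<exists>U' V. openin (Tq conv) U' \<and> openin (Tq conv) V \<and> x \<in> U' \<and> y \<in> V \<and>
            U' \<times> V \<subseteq> {x \<in> UNIV \<times> UNIV. (case x of (x, y) \<Rightarrow> x - y) \<in> U}"
      using A B by blast
  qed
qed auto


lemma lqc_Tq:
  fixes conv :: "'a::ab_group_add filter \<Rightarrow> 'a \<Rightarrow> bool"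
  shows "locally_quasi_convex (Tq conv)"
  unfolding locally_quasi_convex_def
proof (intro conjI group_topology_Tq allI impI)
  fix U assume U: "openin (Tq conv) U \<and> 0 \<in> U"
  then obtain M S where M: "M \<in> EQ conv" "open S" "1 \<in> S" "\<forall>z. z - 0 \<in> bset M S \<longrightarrow> z \<in> U"
    using nb_of_open unfolding nb_def by blast
  have ch: "\<And>\<phi>. \<phi> \<in> M \<Longrightarrow> is_char \<phi>" using M(1) by (auto simp: EQ_def)
  obtain n where n: "\<And>z. cmod z = 1 \<Longrightarrow> (\<forall>j\<le>n. Re (z ^ (2^j)) \<ge> 0) \<Longrightarrow> z \<in> S"
    using pow2_nbhd[OF M(2,3)] by blast
  have N: "pw n M \<in> EQ conv" by (rule EQ_pow[OF M(1)])
  have chN: "\<And>\<psi>. \<psi> \<in> pw n M \<Longrightarrow> is_char \<psi>" using N by (auto simp: EQ_def)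
  define V where "V = bset (pw n M) Tplus"
  have "quasi_convex (Tq conv) V" unfolding quasi_convex_def
  proof (intro allI impI)
    fix x assume "x \<notin> V"
    then obtain \<psi> where "\<psi> \<in> pw n M" "\<psi> x \<notin> Tplus" by (auto simp: V_def bset_def)
    moreover have "cont_char (Tq conv) \<psi>" by (rule EQ_cont_char[OF N \<open>\<psi> \<in> pw n M\<close>])
    moreover have "\<psi> ` V \<subseteq> Tplus" using \<open>\<psi> \<in> pw n M\<close> by (auto simp: V_def bset_def)
    ultimately show "\<exists>\<phi>. cont_char (Tq conv) \<phi> \<and> \<phi> ` V \<subseteq> Tplus \<and> \<phi> x \<notin> Tplus" by blast
  qed
  moreover have "V \<subseteq> U"
  proof
    fix y assume y: "y \<in> V"
    have "y - 0 \<in> bset M S" unfolding bset_def mem_Collect_eq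
    proof
      fix \<phi> assume p: "\<phi> \<in> M"
      have "\<forall>j\<le>n. Re (\<phi> y ^ (2^j)) \<ge> 0"
      proof (intro allI impI)
        fix j assume "j \<le> n"
        hence "(\<lambda>x. \<phi> x ^ (2^j)) \<in> pw n M" using p by (auto simp: pw_def)
        hence "\<phi> y ^ (2^j) \<in> Tplus" using y by (auto simp: V_def bset_def)
        thus "Re (\<phi> y ^ (2^j)) \<ge> 0" by (simp add: Tplus_eq)
      qed
      thus "\<phi> (y - 0) \<in> S" using n[OF char_norm[OF ch[OF p]]] by simp
    qed
    thus "y \<in> U" using M(4) by blast
  qed
  moreover have "nb conv 0 V" unfolding nb_def
  proof (intro bexI[OF _ N] exI[of _ "{z. Re z > 0}"] conjI allI impI)
    fix y assume y: "y - 0 \<in> bset (pw n M) {z. Re z > 0}"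
    show "y \<in> V" unfolding V_def bset_def mem_Collect_eq
    proof
      fix \<psi> assume "\<psi> \<in> pw n M"
      thus "\<psi> y \<in> Tplus" using y char_norm[OF chN] by (auto simp: bset_def Tplus_eq)
    qed
  qed (auto simp: open_halfspace_Re_gt)
  then obtain W where "openin (Tq conv) W" "0 \<in> W" "W \<subseteq> V" using nb_open by blast
  ultimately show "\<exists>V. quasi_convex (Tq conv) V \<and> V \<subseteq> U \<and> (\<exists>W. openin (Tq conv) W \<and> 0 \<in> W \<and> W \<subseteq> V)"
    by blast
qed

lemma conv_shift:
  assumes "convergence_group conv" "conv F x"
  shows "conv (filtermap (\<lambda>y. y - x) F) 0"
proof -
  have "conv (principal {x}) x" using assms(1) by (simp add: convergence_group_def)
  hence "conv (filtermap (\<lambda>(a, b). a - b) (F \<times>\<^sub>F principal {x})) (x - x)"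
    using assms unfolding convergence_group_def by blast
  thus ?thesis by (simp add: prod_filter_principal_singleton2 filtermap_filtermap)
qed

lemma coarser_Tq:
  assumes "convergence_group conv"
  shows "coarser_than_conv (Tq conv) conv"
  unfolding coarser_than_conv_def conv_of_def le_filter_def
proof (intro allI impI)
  fix F x P assume F: "conv F x" and P: "eventually P (nhdsin (Tq conv) x)"
  then obtain U where U: "openin (Tq conv) U" "x \<in> U" "\<forall>z\<in>U. P z"
    unfolding eventually_nhdsin topspace_Tq by blast
  then obtain M S where M: "M \<in> EQ conv" "open S" "1 \<in> S" "\<forall>z. z - x \<in> bset M S \<longrightarrow> z \<in> U"
    using nb_of_open unfolding nb_def by blast
  have "eventually (\<lambda>y. \<forall>\<phi>\<in>M. \<phi> y \<in> S) (filtermap (\<lambda>y. y - x) F)"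
    using M conv_shift[OF assms F] by (auto simp: EQ_def equicont_iff)
  hence "eventually (\<lambda>y. \<forall>\<phi>\<in>M. \<phi> (y - x) \<in> S) F" by (simp add: eventually_filtermap)
  thus "eventually P F" by (rule eventually_mono) (use M(4) U(3) in \<open>auto simp: bset_def\<close>)
qed


lemma char_dbl:
  assumes "is_char \<phi>"
  shows "\<phi> (((\<lambda>y. y + y) ^^ j) y) = \<phi> y ^ (2^j)"
proof (induction j)
  case 0 then show ?case by simp
next
  case (Suc j)
  have "\<phi> (((\<lambda>y. y + y) ^^ Suc j) y) = \<phi> (((\<lambda>y. y + y) ^^ j) y) * \<phi> (((\<lambda>y. y + y) ^^ j) y)"
    by (simp add: char_add[OF assms])
  also have "\<dots> = \<phi> y ^ (2^Suc j)" using Suc by (simp add: power_mult[symmetric] power2_eq_square[symmetric] mult.commute)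
  finally show ?case .
qed

lemma finest_Tq:
  fixes conv :: "'a::ab_group_add filter \<Rightarrow> 'a \<Rightarrow> bool"
  assumes T: "locally_quasi_convex T" and C: "coarser_than_conv T conv" and S: "openin T S"
  shows "openin (Tq conv) S"
  unfolding openin_Tq
proof
  fix x assume xS: "x \<in> S"
  have gt: "group_topology T" using T by (simp add: locally_quasi_convex_def)
  have top: "topspace T = UNIV" using gt by (simp add: group_topology_def)
  have "continuous_map T T (\<lambda>b. b - (- x))"
    by (rule gt_diff[OF gt continuous_map_id[unfolded id_def] gt_const[OF gt]])
  hence "openin T {b. b - (- x) \<in> S}" by (rule gt_open_preimage[OF gt _ S])
  moreover have "0 \<in> {b. b - (- x) \<in> S}" using xS by simp
  ultimately obtain V where V: "quasi_convex T V" "V \<subseteq> {b. b - (- x) \<in> S}"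
      and "\<exists>W. openin T W \<and> 0 \<in> W \<and> W \<subseteq> V"
    using T unfolding locally_quasi_convex_def by blast
  then obtain W where W: "openin T W" "0 \<in> W" "W \<subseteq> V" by blast
  define MV where "MV = {\<phi>. cont_char T \<phi> \<and> \<phi> ` V \<subseteq> Tplus}"
  have chV: "\<And>\<phi>. \<phi> \<in> MV \<Longrightarrow> is_char \<phi>" by (auto simp: MV_def cont_char_def)
  have dblc: "continuous_map T T (\<lambda>y. y + y)"
  proof -
    have "continuous_map T T (\<lambda>y. y - (0 - y))"
      by (rule gt_diff[OF gt continuous_map_id[unfolded id_def] gt_diff[OF gt gt_const[OF gt] continuous_map_id[unfolded id_def]]])
    thus ?thesis by simp
  qed
  define Wn where "Wn = rec_nat W (\<lambda>_ A. W \<inter> {y. y + y \<in> A})"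
  have Wn0: "Wn 0 = W" and WnS: "\<And>n. Wn (Suc n) = W \<inter> {y. y + y \<in> Wn n}" by (simp_all add: Wn_def)
  have Wn_prop: "openin T (Wn n) \<and> 0 \<in> Wn n" for n
  proof (induction n)
    case 0 then show ?case using W Wn0 by simp
  next
    case (Suc n)
    have "openin T {y. y + y \<in> Wn n}" using Suc gt_open_preimage[OF gt dblc] by blast
    thus ?case using Suc W by (simp add: WnS openin_Int)
  qed
  have Wn_dbl: "y \<in> Wn n \<Longrightarrow> j \<le> n \<Longrightarrow> ((\<lambda>y. y + y) ^^ j) y \<in> W" for n j y
  proof (induction n arbitrary: j y)
    case 0 then show ?case by (simp add: Wn0)
  next
    case (Suc n)
    show ?case
    proof (cases j)
      case 0 then show ?thesis using Suc.prems by (simp add: WnS)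
    next
      case (Suc j')
      have "y + y \<in> Wn n" using Suc.prems by (simp add: WnS)
      hence "((\<lambda>y. y + y) ^^ j') (y + y) \<in> W" using Suc.IH Suc.prems(2) \<open>j = Suc j'\<close> by simp
      thus ?thesis using \<open>j = Suc j'\<close> by (simp add: funpow_Suc_right del: funpow.simps)
    qed
  qed
  have EQV: "MV \<in> EQ conv"
    unfolding EQ_def mem_Collect_eq equicont_iff
  proof (intro conjI ballI allI impI)
    fix \<phi> assume "\<phi> \<in> MV" thus "is_char \<phi>" by (rule chV)
  next
    fix F and S :: "complex set" assume F: "conv F 0" and So: "open S \<and> 1 \<in> S"
    obtain n where n: "\<And>z. cmod z = 1 \<Longrightarrow> (\<forall>j\<le>n. Re (z ^ (2^j)) \<ge> 0) \<Longrightarrow> z \<in> S"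
      using pow2_nbhd So by blast
    have "F \<le> nhdsin T 0" using C F by (simp add: coarser_than_conv_def conv_of_def)
    moreover have "eventually (\<lambda>y. y \<in> Wn n) (nhdsin T 0)"
      unfolding eventually_nhdsin using Wn_prop[of n] by blast
    ultimately have "eventually (\<lambda>y. y \<in> Wn n) F" by (rule filter_leD)
    thus "eventually (\<lambda>y. \<forall>\<phi>\<in>MV. \<phi> y \<in> S) F"
    proof (rule eventually_mono, intro ballI)
      fix y \<phi> assume y: "y \<in> Wn n" and p: "\<phi> \<in> MV"
      have "\<forall>j\<le>n. Re (\<phi> y ^ (2^j)) \<ge> 0"
      proof (intro allI impI)
        fix j assume "j \<le> n"
        hence "((\<lambda>y. y + y) ^^ j) y \<in> V" using Wn_dbl[OF y] W(3) by blast
        hence "\<phi> (((\<lambda>y. y + y) ^^ j) y) \<in> Tplus" using p by (auto simp: MV_def)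
        thus "Re (\<phi> y ^ (2^j)) \<ge> 0" by (simp add: char_dbl[OF chV[OF p]] Tplus_eq)
      qed
      thus "\<phi> y \<in> S" using n char_norm[OF chV[OF p]] by blast
    qed
  qed
  show "nb conv x S" unfolding nb_def
  proof (intro bexI[OF _ EQV] exI[of _ "{z. Re z > 0}"] conjI allI impI)
    fix y assume y: "y - x \<in> bset MV {z. Re z > 0}"
    have "y - x \<in> V"
    proof (rule ccontr)
      assume "y - x \<notin> V"
      then obtain \<phi> where "cont_char T \<phi>" "\<phi> ` V \<subseteq> Tplus" "\<phi> (y - x) \<notin> Tplus"
        using V(1) unfolding quasi_convex_def by blast
      hence "\<phi> \<in> MV" by (simp add: MV_def)
      hence "Re (\<phi> (y - x)) > 0" using y by (auto simp: bset_def)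
      thus False using \<open>\<phi> (y - x) \<notin> Tplus\<close> char_norm[OF chV[OF \<open>\<phi> \<in> MV\<close>]] by (simp add: Tplus_eq)
    qed
    thus "y \<in> S" using V(2) by auto
  qed (auto simp: open_halfspace_Re_gt)
qed


lemma lqc_eq:
  fixes conv :: "'a::ab_group_add filter \<Rightarrow> 'a \<Rightarrow> bool"
  assumes G: "convergence_group conv"
  shows "lqc_modification conv = Tq conv"
  unfolding lqc_modification_def
proof (rule the_equality)
  show "locally_quasi_convex (Tq conv) \<and> coarser_than_conv (Tq conv) conv \<and>
    (\<forall>T'. locally_quasi_convex T' \<and> coarser_than_conv T' conv \<longrightarrow> (\<forall>S. openin T' S \<longrightarrow> openin (Tq conv) S))"
    using lqc_Tq coarser_Tq[OF G] finest_Tq by blast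
next
  fix T assume T: "locally_quasi_convex T \<and> coarser_than_conv T conv \<and>
    (\<forall>T'. locally_quasi_convex T' \<and> coarser_than_conv T' conv \<longrightarrow> (\<forall>S. openin T' S \<longrightarrow> openin T S))"
  show "T = Tq conv" unfolding topology_eq
  proof (intro allI iffI)
    fix S assume "openin T S" thus "openin (Tq conv) S" using T finest_Tq by blast
  next
    fix S assume "openin (Tq conv) S" thus "openin T S" using T lqc_Tq coarser_Tq[OF G] by blast
  qed
qed

lemma Gamma_eq:
  fixes conv :: "'a::ab_group_add filter \<Rightarrow> 'a \<Rightarrow> bool"
  assumes G: "convergence_group conv"
  shows "Gamma conv = Gamma (conv_of (Tq conv))"
proof (intro set_eqI iffI)
  fix \<phi> assume p: "\<phi> \<in> Gamma conv"
  hence c: "is_char \<phi>" by (simp add: Gamma_def)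
  have E: "{\<phi>} \<in> EQ conv" unfolding EQ_def mem_Collect_eq equicont_iff
  proof (intro conjI allI impI)
    fix F and S :: "complex set" assume F: "conv F 0" and S: "open S \<and> 1 \<in> S"
    have "filterlim \<phi> (nhds (\<phi> 0)) F" using p F by (simp add: Gamma_def)
    hence "eventually (\<lambda>y. \<phi> y \<in> S) F" using S char_zero[OF c] unfolding tendsto_def by auto
    thus "eventually (\<lambda>y. \<forall>\<psi>\<in>{\<phi>}. \<psi> y \<in> S) F" by simp
  qed (use c in simp)
  show "\<phi> \<in> Gamma (conv_of (Tq conv))" unfolding Gamma_def mem_Collect_eq
  proof (intro conjI allI impI)
    fix F x assume "conv_of (Tq conv) F x"
    hence F: "F \<le> nhdsin (Tq conv) x" by (simp add: conv_of_def)
    show "filterlim \<phi> (nhds (\<phi> x)) F" unfolding tendsto_def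
    proof (intro allI impI)
      fix S assume "open S" "\<phi> x \<in> S"
      hence "nb conv x {y. \<phi> y \<in> S}" using EQ_char_nb[OF E] by blast
      from filter_leD[OF F nb_eventually[OF this]] show "eventually (\<lambda>y. \<phi> y \<in> S) F" by simp
    qed
  qed (rule c)
next
  fix \<phi> assume "\<phi> \<in> Gamma (conv_of (Tq conv))"
  thus "\<phi> \<in> Gamma conv" using coarser_Tq[OF G] by (auto simp: Gamma_def coarser_than_conv_def)
qed

theorem corollary2p12:
  fixes conv :: "'a::ab_group_add filter \<Rightarrow> 'a \<Rightarrow> bool"
  assumes "convergence_group conv"
  shows "g_barrelled conv \<longleftrightarrow> g_barrelled (conv_of (lqc_modification conv))"
  unfolding lqc_eq[OF assms] g_barrelled_def Gamma_eq[OF assms, symmetric]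
proof (intro iffI allI impI)
  fix M assume gb: "\<forall>M. M \<subseteq> Gamma conv \<and> compact M \<longrightarrow> equicontinuous conv M"
    and M: "M \<subseteq> Gamma conv \<and> compact M"
  hence E: "M \<in> EQ conv" using gb by (auto simp: EQ_def Gamma_def)
  show "equicontinuous (conv_of (Tq conv)) M" unfolding equicont_iff
  proof (intro allI impI)
    fix F and S :: "complex set" assume "conv_of (Tq conv) F 0" and S: "open S \<and> 1 \<in> S"
    hence F: "F \<le> nhdsin (Tq conv) 0" by (simp add: conv_of_def)
    have "nb conv 0 (bset M S)" unfolding nb_def using E S by auto
    from filter_leD[OF F nb_eventually[OF this]]
    show "eventually (\<lambda>y. \<forall>\<phi>\<in>M. \<phi> y \<in> S) F" by (simp add: bset_def)
  qed
next
  fix M assume gb: "\<forall>M. M \<subseteq> Gamma conv \<and> compact M \<longrightarrow> equicontinuous (conv_of (Tq conv)) M"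
    and M: "M \<subseteq> Gamma conv \<and> compact M"
  hence "equicontinuous (conv_of (Tq conv)) M" by blast
  thus "equicontinuous conv M" using coarser_Tq[OF assms]
    by (auto simp: equicontinuous_def coarser_than_conv_def)
qed

end
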